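(* Let $P=\{p_1,\dots,p_n\}\subset\mathbb{R}^2$ be in general position and let $f\in\mathbb{R}^{\binom n2}$ be arbitrary. Then $X_f(P)$ is bounded.
   Context: General position: no three points collinear. Infinitesimal motions $v\in(\mathbb{R}^2)^n$ are normalized by $v_1^1=v_1^2=v_2^1=0$ (with $p_1,p_2$ having different $y$-coordinates). $\bar X_f(P)$ is the set of normalized $v$ with $\langle p_i-p_j,v_i-v_j\rangle\ge f_{ij}$ for all $i<j$, and $X_f(P)$ is the subset of $\bar X_f(P)$ on which these inequalities hold with equality for every pair $ij$ that is an edge of the boundary of the convex hull of $P$. *)

theory Defs
  imports "HOL-Analysis.Analysis"
begin

text \<open>Point configurations P = {p_1,...,p_n} in the plane are given as maps
  p :: nat => real^2 on the index set {1..n}; coordinate 1 is x, coordinate 2 is y.\<close>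

definition general_position :: "nat \<Rightarrow> (nat \<Rightarrow> real^2) \<Rightarrow> bool" where
  "general_position n p \<longleftrightarrow>
     inj_on p {1..n} \<and>
     (\<forall>i\<in>{1..n}. \<forall>j\<in>{1..n}. \<forall>k\<in>{1..n}.
        i \<noteq> j \<and> j \<noteq> k \<and> i \<noteq> k \<longrightarrow> \<not> collinear {p i, p j, p k})"

definition hull_edge :: "nat \<Rightarrow> (nat \<Rightarrow> real^2) \<Rightarrow> nat \<Rightarrow> nat \<Rightarrow> bool" where
  "hull_edge n p i j \<longleftrightarrow> i \<in> {1..n} \<and> j \<in> {1..n} \<and> i \<noteq> j \<and>
     closed_segment (p i) (p j) face_of convex hull (p ` {1..n})"

definition normalized_motion :: "nat \<Rightarrow> (nat \<Rightarrow> real^2) \<Rightarrow> bool" where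
  "normalized_motion n v \<longleftrightarrow> (\<forall>i. i \<notin> {1..n} \<longrightarrow> v i = 0) \<and>
     v 1 $ 1 = 0 \<and> v 1 $ 2 = 0 \<and> v 2 $ 1 = 0"

definition Xbar :: "nat \<Rightarrow> (nat \<Rightarrow> real^2) \<Rightarrow> (nat \<Rightarrow> nat \<Rightarrow> real) \<Rightarrow> (nat \<Rightarrow> real^2) set" where
  "Xbar n p f = {v. normalized_motion n v \<and>
     (\<forall>i\<in>{1..n}. \<forall>j\<in>{1..n}. i < j \<longrightarrow> (p i - p j) \<bullet> (v i - v j) \<ge> f i j)}"

definition X :: "nat \<Rightarrow> (nat \<Rightarrow> real^2) \<Rightarrow> (nat \<Rightarrow> nat \<Rightarrow> real) \<Rightarrow> (nat \<Rightarrow> real^2) set" where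
  "X n p f = {v \<in> Xbar n p f.
     \<forall>i j. i < j \<and> hull_edge n p i j \<longrightarrow> (p i - p j) \<bullet> (v i - v j) = f i j}"

definition motions_bounded :: "nat \<Rightarrow> (nat \<Rightarrow> real^2) set \<Rightarrow> bool" where
  "motions_bounded n S \<longleftrightarrow> (\<exists>B. \<forall>v\<in>S. \<forall>i\<in>{1..n}. norm (v i) \<le> B)"

end

theory Submission
  imports Defs
begin

definition det2 :: "real^2 \<Rightarrow> real^2 \<Rightarrow> real" where
  "det2 x y = x$1 * y$2 - x$2 * y$1"

definition rot :: "real^2 \<Rightarrow> real^2" where
  "rot x = vector [- x$2, x$1]"

lemma inner2: "x \<bullet> (y::real^2) = x$1 * y$1 + x$2 * y$2"
  by (simp add: inner_vec_def sum_2)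

lemma vec2_eq: "(x::real^2) = y \<longleftrightarrow> x$1 = y$1 \<and> x$2 = y$2"
  by (simp add: vec_eq_iff forall_2)

lemma rot_comp[simp]: "rot x $ 1 = - x$2" "rot x $ 2 = x$1"
  by (simp_all add: rot_def)

lemma rot_inner: "rot x \<bullet> y = det2 x y"
  by (simp add: inner2 det2_def)

lemma rot_self: "x \<bullet> rot x = 0"
  by (simp add: inner2)

lemma norm_rot: "norm (rot x) = norm x"
proof -
  have "rot x \<bullet> rot x = x \<bullet> x" by (simp add: inner2)
  thus ?thesis by (simp add: norm_eq_sqrt_inner)
qed

lemma rot_diff: "rot (x - y) = rot x - rot y"
  by (simp add: vec2_eq)
lemma rot_add: "rot (x + y) = rot x + rot y"
  by (simp add: vec2_eq)
lemma rot_scale: "rot (c *\<^sub>R x) = c *\<^sub>R rot x"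
  by (simp add: vec2_eq)

lemma det2_self: "det2 x (rot x) = x \<bullet> x"
  by (simp add: det2_def inner2)

lemma two_dir_bound:
  assumes "det2 d1 d2 \<noteq> 0"
  shows "norm w \<le> (norm d2 * \<bar>d1 \<bullet> w\<bar> + norm d1 * \<bar>d2 \<bullet> w\<bar>) / \<bar>det2 d1 d2\<bar>"
proof -
  let ?D = "det2 d1 d2"
  have eq: "?D *\<^sub>R w = (d2 \<bullet> w) *\<^sub>R rot d1 - (d1 \<bullet> w) *\<^sub>R rot d2"
    by (simp add: vec2_eq inner2 det2_def algebra_simps)
  have "\<bar>?D\<bar> * norm w = norm ((d2 \<bullet> w) *\<^sub>R rot d1 - (d1 \<bullet> w) *\<^sub>R rot d2)"
    by (subst eq[symmetric]) simp
  also have "\<dots> \<le> \<bar>d2 \<bullet> w\<bar> * norm d1 + \<bar>d1 \<bullet> w\<bar> * norm d2"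
    by (rule order_trans[OF norm_triangle_ineq4]) (simp add: norm_rot)
  finally have "\<bar>?D\<bar> * norm w \<le> norm d2 * \<bar>d1 \<bullet> w\<bar> + norm d1 * \<bar>d2 \<bullet> w\<bar>" by (simp add: mult.commute)
  thus ?thesis using assms by (simp add: pos_le_divide_eq mult.commute)
qed


lemma det2_swap: "det2 x y = - det2 y x" by (simp add: det2_def)
lemma det2_same[simp]: "det2 x x = 0" by (simp add: det2_def)
lemma det2_zero[simp]: "det2 x 0 = 0" "det2 0 x = 0" by (simp_all add: det2_def)
lemma det2_diff_left: "det2 (x - y) z = det2 x z - det2 y z" by (simp add: det2_def algebra_simps)
lemma det2_diff_right: "det2 z (x - y) = det2 z x - det2 z y" by (simp add: det2_def algebra_simps)
lemma det2_minus_left: "det2 (- x) z = - det2 x z" by (simp add: det2_def)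
lemma det2_minus_right: "det2 z (- x) = - det2 z x" by (simp add: det2_def)
lemma det2_cyc: "det2 (c - b) (a - b) = det2 (b - a) (c - a)" by (simp add: det2_def algebra_simps)

lemma det2_perp:
  assumes "x \<bullet> u = 0"
  shows "det2 x y * (u \<bullet> u) = det2 x u * (y \<bullet> u)"
proof -
  have "det2 x y * (u \<bullet> u) - det2 x u * (y \<bullet> u) = (x \<bullet> u) * (y$2*u$1 - y$1*u$2)"
    unfolding det2_def inner2 by (simp add: algebra_simps)
  then show ?thesis using assms by simp
qed

lemma det2_three: "det2 a b *\<^sub>R d = det2 b d *\<^sub>R (- a) + det2 a d *\<^sub>R b"
  by (simp add: vec2_eq det2_def algebra_simps)

lemma small_eps:
  assumes "finite K" "\<forall>k\<in>K. (\<delta> k::real) > 0"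
  shows "\<exists>\<epsilon>>0. \<forall>k\<in>K. \<epsilon> * \<bar>c k\<bar> < \<delta> k"
  using assms
proof (induction K rule: finite_induct)
  case empty then show ?case by (auto intro: exI[of _ 1])
next
  case (insert x F)
  then obtain e where e: "e > 0" "\<forall>k\<in>F. e * \<bar>c k\<bar> < \<delta> k" by auto
  define e' where "e' = min e (\<delta> x / (1 + \<bar>c x\<bar>))"
  have pos: "e' > 0" using e insert by (simp add: e'_def)
  have "e' * \<bar>c x\<bar> < \<delta> x"
  proof -
    have "e' * (1 + \<bar>c x\<bar>) \<le> \<delta> x"
      unfolding e'_def by (smt (verit) divide_pos_pos insert.prems le_divide_eq min.cobounded2 insertI1)
    thus ?thesis using pos by (smt (verit) mult_pos_pos distrib_left mult.right_neutral)
  qed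
  moreover have "\<forall>k\<in>F. e' * \<bar>c k\<bar> < \<delta> k"
    using e by (smt (verit) e'_def abs_ge_zero min.cobounded1 mult_right_mono)
  ultimately show ?case using pos by auto
qed


locale cfg =
  fixes n :: nat and p :: "nat \<Rightarrow> real^2"
  assumes n2: "n \<ge> 2" and gp: "general_position n p"
begin

abbreviation "I \<equiv> {1..n}"

definition edge_ok :: "nat \<Rightarrow> nat \<Rightarrow> bool" where
  "edge_ok i j \<longleftrightarrow> i \<in> I \<and> j \<in> I \<and> i \<noteq> j \<and>
     (\<forall>k\<in>I. k \<noteq> i \<and> k \<noteq> j \<longrightarrow> det2 (p j - p i) (p k - p i) > 0)"

definition E :: "nat set" where
  "E = {i\<in>I. \<exists>u. \<forall>k\<in>I. k \<noteq> i \<longrightarrow> (p k - p i) \<bullet> u < 0}"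

lemma pinj: "i \<in> I \<Longrightarrow> j \<in> I \<Longrightarrow> i \<noteq> j \<Longrightarrow> p i \<noteq> p j"
  using gp unfolding general_position_def inj_on_def by blast

lemma ncol:
  assumes "i \<in> I" "j \<in> I" "k \<in> I" "i \<noteq> j" "j \<noteq> k" "i \<noteq> k"
  shows "det2 (p j - p i) (p k - p i) \<noteq> 0"
proof
  assume d0: "det2 (p j - p i) (p k - p i) = 0"
  let ?x = "p j - p i" and ?y = "p k - p i"
  have x0: "?x \<noteq> 0" using pinj assms by auto
  have "\<exists>c. ?y = c *\<^sub>R ?x"
  proof (cases "?x $ 1 = 0")
    case True
    then have "?x $ 2 \<noteq> 0" using x0 by (simp add: vec2_eq)
    moreover have "?y $ 1 = 0" using d0 True \<open>?x $ 2 \<noteq> 0\<close> by (simp add: det2_def)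
    ultimately have "?y = (?y$2 / ?x$2) *\<^sub>R ?x" using True by (simp add: vec2_eq)
    then show ?thesis by blast
  next
    case False
    have "?y $ 2 = (?y$1 / ?x$1) * ?x $ 2" using d0 False
      unfolding det2_def by (simp add: field_simps)
    then have "?y = (?y$1 / ?x$1) *\<^sub>R ?x" using False by (simp add: vec2_eq)
    then show ?thesis by blast
  qed
  then have "collinear {0, ?x, ?y}" by (simp add: collinear_lemma)
  then have "collinear {p j, p i, p k}" by (subst collinear_3) simp
  moreover have "{p j, p i, p k} = {p i, p j, p k}" by auto
  ultimately have "collinear {p i, p j, p k}" by simp
  then show False using gp assms unfolding general_position_def by blast
qed

lemma edge_hull:
  assumes "edge_ok i j"
  shows "hull_edge n p i j"
proof -
  have ij: "i \<in> I" "j \<in> I" "i \<noteq> j" and pos: "\<And>k. k \<in> I \<Longrightarrow> k \<noteq> i \<Longrightarrow> k \<noteq> j \<Longrightarrow> det2 (p j - p i) (p k - p i) > 0"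
    using assms unfolding edge_ok_def by auto
  define d where "d = p j - p i"
  define a where "a = rot d"
  define b where "b = a \<bullet> p i"
  have h: "a \<bullet> x - b = det2 d (x - p i)" for x
    unfolding a_def b_def by (simp add: rot_inner[symmetric] inner_diff_right)
  let ?S = "convex hull (p ` I)"
  have gen: "b \<le> a \<bullet> y" if yP: "y \<in> p ` I" for y
  proof -
    obtain k where k: "k \<in> I" "y = p k" using yP by auto
    show ?thesis
    proof (cases "k = i \<or> k = j")
      case True then show ?thesis using h[of y] k by (auto simp: d_def)
    next
      case False then show ?thesis using pos[of k] k h[of y] by (simp add: d_def)
    qed
  qed
  have sub: "?S \<subseteq> {x. b \<le> a \<bullet> x}"
    by (rule hull_minimal) (use gen convex_halfspace_ge in auto)
  have face: "?S \<inter> {x. a \<bullet> x = b} face_of ?S"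
    by (rule face_of_Int_supporting_hyperplane_ge) (use sub in auto)
  have eq: "?S \<inter> {x. a \<bullet> x = b} = closed_segment (p i) (p j)"
  proof
    show "closed_segment (p i) (p j) \<subseteq> ?S \<inter> {x. a \<bullet> x = b}"
    proof
      fix x assume x: "x \<in> closed_segment (p i) (p j)"
      have "closed_segment (p i) (p j) \<subseteq> ?S"
        unfolding segment_convex_hull by (rule hull_mono) (use ij in auto)
      moreover obtain u where u: "x = (1 - u) *\<^sub>R p i + u *\<^sub>R p j" using x by (auto simp: in_segment)
      have "x - p i = u *\<^sub>R d" using u by (simp add: d_def algebra_simps)
      then have "a \<bullet> x - b = 0" using h[of x] by (simp add: det2_def)
      ultimately show "x \<in> ?S \<inter> {x. a \<bullet> x = b}" using x by auto
    qed
  next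
    show "?S \<inter> {x. a \<bullet> x = b} \<subseteq> closed_segment (p i) (p j)"
    proof
      fix x assume x: "x \<in> ?S \<inter> {x. a \<bullet> x = b}"
      let ?P = "p ` I"
      have fin: "finite ?P" by simp
      have xS: "x \<in> convex hull ?P" using x by simp
      obtain w where w: "\<forall>y\<in>?P. 0 \<le> w y" "sum w ?P = 1" "(\<Sum>y\<in>?P. w y *\<^sub>R y) = x"
        using xS unfolding convex_hull_finite[OF fin] by blast
      have e1: "(\<Sum>y\<in>?P. w y * (a \<bullet> y - b)) = (\<Sum>y\<in>?P. w y * (a \<bullet> y)) - (\<Sum>y\<in>?P. w y) * b"
        by (simp add: right_diff_distrib sum_subtractf sum_distrib_right)
      have e2: "(\<Sum>y\<in>?P. w y * (a \<bullet> y)) = a \<bullet> (\<Sum>y\<in>?P. w y *\<^sub>R y)"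
        by (simp add: inner_sum_right)
      have s0: "(\<Sum>y\<in>?P. w y * (a \<bullet> y - b)) = 0" using e1 e2 w x by simp
      have nn: "\<forall>y\<in>?P. 0 \<le> w y * (a \<bullet> y - b)" using w gen by simp
      have z: "\<forall>y\<in>?P. w y * (a \<bullet> y - b) = 0"
        using sum_nonneg_eq_0_iff[OF fin, of "\<lambda>y. w y * (a \<bullet> y - b)"] nn s0 by simp
      have wz: "w y = 0" if yy: "y \<in> ?P" "y \<noteq> p i" "y \<noteq> p j" for y
      proof -
        obtain k where k: "k \<in> I" "y = p k" using yy by auto
        have "k \<noteq> i" "k \<noteq> j" using yy k by auto
        then have "a \<bullet> y - b > 0" using pos[of k] k h[of y] by (simp add: d_def)
        moreover have "w y * (a \<bullet> y - b) = 0" using z yy(1) by blast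
        ultimately show ?thesis by simp
      qed
      have sub2: "{p i, p j} \<subseteq> ?P" using ij by auto
      have s1: "sum w ?P = sum w {p i, p j}"
        by (rule sum.mono_neutral_right[OF fin sub2]) (use wz in auto)
      have s2: "(\<Sum>y\<in>?P. w y *\<^sub>R y) = (\<Sum>y\<in>{p i, p j}. w y *\<^sub>R y)"
        by (rule sum.mono_neutral_right[OF fin sub2]) (use wz in auto)
      have pij: "p i \<noteq> p j" using pinj ij by auto
      have wi: "w (p i) = 1 - w (p j)" using s1 w pij by simp
      have xe: "x = (1 - w (p j)) *\<^sub>R p i + w (p j) *\<^sub>R p j" using s2 w pij wi by simp
      have "0 \<le> w (p j)" "0 \<le> w (p i)" using w sub2 by auto
      then have "0 \<le> w (p j) \<and> w (p j) \<le> 1" using wi by simp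
      then show "x \<in> closed_segment (p i) (p j)"
        unfolding in_segment using xe by blast
    qed
  qed
  show ?thesis unfolding hull_edge_def using face eq ij by simp
qed

lemma edge_hull': "edge_ok i j \<Longrightarrow> hull_edge n p j i"
  using edge_hull unfolding hull_edge_def by (auto simp: closed_segment_commute)

end

context cfg begin

lemma edge_E:
  assumes "edge_ok i j"
  shows "i \<in> E" "j \<in> E"
proof -
  have ij: "i \<in> I" "j \<in> I" "i \<noteq> j" and pos: "\<And>k. k \<in> I \<Longrightarrow> k \<noteq> i \<Longrightarrow> k \<noteq> j \<Longrightarrow> det2 (p j - p i) (p k - p i) > 0"
    using assms unfolding edge_ok_def by auto
  define d where "d = p j - p i"
  have dd: "d \<bullet> d > 0" using pinj[OF ij] by (simp add: d_def)
  let ?K = "I - {i, j}"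
  obtain e where e: "e > 0" "\<forall>k\<in>?K. e * \<bar>(p k - p j) \<bullet> d\<bar> < det2 d (p k - p i)"
    using small_eps[of ?K "\<lambda>k. det2 d (p k - p i)" "\<lambda>k. (p k - p j) \<bullet> d"] pos by (auto simp: d_def)
  obtain e' where e': "e' > 0" "\<forall>k\<in>?K. e' * \<bar>(p k - p i) \<bullet> d\<bar> < det2 d (p k - p i)"
    using small_eps[of ?K "\<lambda>k. det2 d (p k - p i)" "\<lambda>k. (p k - p i) \<bullet> d"] pos by (auto simp: d_def)
  have "\<forall>k\<in>I. k \<noteq> j \<longrightarrow> (p k - p j) \<bullet> (- rot d + e *\<^sub>R d) < 0"
  proof (intro ballI impI)
    fix k assume k: "k \<in> I" "k \<noteq> j"
    show "(p k - p j) \<bullet> (- rot d + e *\<^sub>R d) < 0"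
    proof (cases "k = i")
      case True
      have "p k - p j = - d" using True by (simp add: d_def)
      then show ?thesis using e dd by (simp add: inner_add_right inner_diff_right rot_self)
    next
      case False
      have "(p k - p j) \<bullet> rot d = det2 d (p k - p j)"
        by (simp add: inner_commute rot_inner)
      also have "\<dots> = det2 d (p k - p i)" unfolding d_def by (simp add: det2_def algebra_simps)
      finally have "(p k - p j) \<bullet> rot d = det2 d (p k - p i)" .
      moreover have "e * ((p k - p j) \<bullet> d) < det2 d (p k - p i)"
      proof -
        have kK: "k \<in> I - {i, j}" using k False by auto
        have "e * \<bar>(p k - p j) \<bullet> d\<bar> < det2 d (p k - p i)" using e(2) kK by blast
        moreover have "e * ((p k - p j) \<bullet> d) \<le> e * \<bar>(p k - p j) \<bullet> d\<bar>" using e(1) by (intro mult_left_mono) auto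
        ultimately show ?thesis by linarith
      qed
      ultimately show ?thesis by (simp add: inner_add_right inner_diff_right)
    qed
  qed
  then show "j \<in> E" unfolding E_def using ij by blast
  have "\<forall>k\<in>I. k \<noteq> i \<longrightarrow> (p k - p i) \<bullet> (- rot d - e' *\<^sub>R d) < 0"
  proof (intro ballI impI)
    fix k assume k: "k \<in> I" "k \<noteq> i"
    show "(p k - p i) \<bullet> (- rot d - e' *\<^sub>R d) < 0"
    proof (cases "k = j")
      case True
      have "p k - p i = d" using True by (simp add: d_def)
      then show ?thesis using e' dd by (simp add: inner_diff_right rot_self)
    next
      case False
      have "(p k - p i) \<bullet> rot d = det2 d (p k - p i)"
        by (simp add: inner_commute rot_inner)
      moreover have "- e' * ((p k - p i) \<bullet> d) < det2 d (p k - p i)"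
      proof -
        have kK: "k \<in> I - {i, j}" using k False by auto
        have "e' * \<bar>(p k - p i) \<bullet> d\<bar> < det2 d (p k - p i)" using e'(2) kK by blast
        moreover have "e' * (- ((p k - p i) \<bullet> d)) \<le> e' * \<bar>(p k - p i) \<bullet> d\<bar>" using e'(1) by (intro mult_left_mono) auto
        ultimately show ?thesis by linarith
      qed
      ultimately show ?thesis by (simp add: inner_diff_right)
    qed
  qed
  then show "i \<in> E" unfolding E_def using ij by blast
qed

lemma succ_inj:
  assumes "edge_ok i j" "edge_ok i' j" shows "i = i'"
proof (rule ccontr)
  assume ne: "i \<noteq> i'"
  have "det2 (p j - p i) (p i' - p i) > 0" using assms ne unfolding edge_ok_def by auto
  moreover have "det2 (p j - p i') (p i - p i') > 0" using assms ne unfolding edge_ok_def by auto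
  moreover have "det2 (p j - p i') (p i - p i') = - det2 (p j - p i) (p i' - p i)"
    by (simp add: det2_def algebra_simps)
  ultimately show False by simp
qed

lemma perp_det_ne:
  assumes "x \<bullet> u = 0" "x \<noteq> 0" "u \<noteq> 0" shows "det2 x u \<noteq> 0"
proof
  assume "det2 x u = 0"
  then have "det2 x x * (u \<bullet> u) = 0" using det2_perp[OF assms(1), of x] by simp
  have h: "x \<bullet> x * (u \<bullet> u) = det2 x u ^ 2 + (x \<bullet> u) ^ 2"
    by (simp add: inner2 det2_def power2_eq_square algebra_simps)
  have "x \<bullet> x * (u \<bullet> u) > 0" using assms by simp
  then show False using h assms \<open>det2 x u = 0\<close> by simp
qed

lemma succ_ex:
  assumes "i \<in> E" shows "\<exists>j. edge_ok i j"
proof -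
  obtain u where iI: "i \<in> I" and u: "\<forall>k\<in>I. k \<noteq> i \<longrightarrow> (p k - p i) \<bullet> u < 0"
    using assms unfolding E_def by auto
  let ?K = "I - {i}"
  have Kne: "?K \<noteq> {}"
  proof -
    have a: "1 \<in> I" "2 \<in> I" using n2 by auto
    show ?thesis
    proof (cases "i = 1")
      case True then have "2 \<in> ?K" using a by auto
      then show ?thesis by blast
    next
      case False then have "1 \<in> ?K" using a by auto
      then show ?thesis by blast
    qed
  qed
  define e1 where "e1 = - u"
  define e2 where "e2 = rot e1"
  define s where "s k = ((p k - p i) \<bullet> e2) / ((p k - p i) \<bullet> e1)" for k
  have x1pos: "(p k - p i) \<bullet> e1 > 0" if "k \<in> ?K" for k using u that by (auto simp: e1_def)
  define m where "m = Min (s ` ?K)"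
  have "m \<in> s ` ?K" unfolding m_def using Kne by (intro Min_in) auto
  then obtain j where j: "j \<in> ?K" "s j = m" by (metis imageE)
  have jmin: "s j \<le> s k" if "k \<in> ?K" for k using j that unfolding m_def by (simp add: Min_le)
  have key: "det2 x y * (e1 \<bullet> e1) = (x \<bullet> e1) * (y \<bullet> e2) - (x \<bullet> e2) * (y \<bullet> e1)" for x y
    by (simp add: e2_def inner2 det2_def algebra_simps)
  have e1pos: "e1 \<bullet> e1 > 0"
  proof -
    have "(p j - p i) \<bullet> e1 > 0" using x1pos j(1) by blast
    then have "e1 \<noteq> 0" by auto
    then show ?thesis by simp
  qed
  have "edge_ok i j"
    unfolding edge_ok_def
  proof (intro conjI ballI impI)
    show "i \<in> I" "j \<in> I" "i \<noteq> j" using iI j by auto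
    fix k assume kI: "k \<in> I" and kn: "k \<noteq> i \<and> k \<noteq> j"
    have k: "k \<in> I \<and> k \<noteq> i \<and> k \<noteq> j" using kI kn by simp
    let ?x = "p j - p i" and ?y = "p k - p i"
    have kK: "k \<in> ?K" using k by auto
    have a: "?x \<bullet> e1 > 0" "?y \<bullet> e1 > 0" using x1pos j kK by auto
    have ne: "det2 ?x ?y \<noteq> 0" using ncol[of i j k] iI j k by auto
    have "s j \<le> s k" using jmin kK .
    then have "(?x \<bullet> e2) * (?y \<bullet> e1) \<le> (?y \<bullet> e2) * (?x \<bullet> e1)"
      using a unfolding s_def by (simp add: divide_le_eq le_divide_eq field_simps)
    then have "det2 ?x ?y * (e1 \<bullet> e1) \<ge> 0" using key[of ?x ?y] by (simp add: algebra_simps)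
    then have "det2 ?x ?y \<ge> 0" using e1pos by (simp add: zero_le_mult_iff)
    then show "det2 ?x ?y > 0" using ne by simp
  qed
  then show ?thesis by blast
qed

end

context cfg begin

lemma max_in_E:
  assumes u0: "u \<noteq> 0"
  shows "\<exists>m\<in>E. \<forall>k\<in>I. p k \<bullet> u \<le> p m \<bullet> u \<and> (k \<notin> E \<longrightarrow> p k \<bullet> u < p m \<bullet> u)"
proof -
  define M where "M = Max ((\<lambda>k. p k \<bullet> u) ` I)"
  have Ine: "I \<noteq> {}" using n2 by auto
  have le: "p k \<bullet> u \<le> M" if "k \<in> I" for k unfolding M_def using that by (intro Max_ge) auto
  have "M \<in> (\<lambda>k. p k \<bullet> u) ` I" unfolding M_def using Ine by (intro Max_in) auto
  then obtain m0 where m0: "m0 \<in> I" "p m0 \<bullet> u = M" by auto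
  have MxE: "m \<in> E" if m: "m \<in> I" "p m \<bullet> u = M" for m
  proof (cases "\<forall>k\<in>I. k \<noteq> m \<longrightarrow> p k \<bullet> u < M")
    case True
    then have "\<forall>k\<in>I. k \<noteq> m \<longrightarrow> (p k - p m) \<bullet> u < 0" using m by (simp add: inner_diff_left)
    then show ?thesis unfolding E_def using m by blast
  next
    case False
    then obtain m' where m': "m' \<in> I" "m' \<noteq> m" "p m' \<bullet> u = M" using le by force
    define x where "x = p m' - p m"
    have xu: "x \<bullet> u = 0" using m m' by (simp add: x_def inner_diff_left)
    have x0: "x \<noteq> 0" using pinj[of m' m] m m' by (simp add: x_def)
    define \<sigma> where "\<sigma> = det2 x u"
    have s0: "\<sigma> \<noteq> 0" using perp_det_ne[OF xu x0 u0] by (simp add: \<sigma>_def)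
    have uu: "u \<bullet> u > 0" using u0 by simp
    have lt: "(p k - p m) \<bullet> u < 0" if k: "k \<in> I" "k \<noteq> m" "k \<noteq> m'" for k
    proof (rule ccontr)
      assume "\<not> (p k - p m) \<bullet> u < 0"
      then have "p k \<bullet> u = M" using le[OF k(1)] m by (simp add: inner_diff_left)
      then have "(p k - p m) \<bullet> u = 0" using m by (simp add: inner_diff_left)
      then have "det2 x (p k - p m) * (u \<bullet> u) = 0" using det2_perp[OF xu] by simp
      then have "det2 x (p k - p m) = 0" using uu by simp
      then show False using ncol[of m m' k] m m' k by (simp add: x_def)
    qed
    show ?thesis
    proof (cases "\<sigma> < 0")
      case True
      have "edge_ok m m'" unfolding edge_ok_def
      proof (intro conjI ballI impI)
        fix k assume kI: "k \<in> I" and kn: "k \<noteq> m \<and> k \<noteq> m'"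
        have k: "k \<in> I \<and> k \<noteq> m \<and> k \<noteq> m'" using kI kn by simp
        have "det2 x (p k - p m) * (u \<bullet> u) = \<sigma> * ((p k - p m) \<bullet> u)"
          using det2_perp[OF xu] by (simp add: \<sigma>_def)
        moreover have "\<sigma> * ((p k - p m) \<bullet> u) > 0" using True lt[of k] k by (simp add: mult_neg_neg)
        ultimately have "det2 x (p k - p m) * (u \<bullet> u) > 0" by simp
        then have "det2 x (p k - p m) > 0" using uu by (simp add: zero_less_mult_iff)
        then show "det2 (p m' - p m) (p k - p m) > 0" by (simp add: x_def)
      qed (use m m' in auto)
      then show ?thesis using edge_E by blast
    next
      case False
      then have sp: "\<sigma> > 0" using s0 by simp
      have xu': "(- x) \<bullet> u = 0" using xu by simp
      have "edge_ok m' m" unfolding edge_ok_def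
      proof (intro conjI ballI impI)
        fix k assume kI: "k \<in> I" and kn: "k \<noteq> m' \<and> k \<noteq> m"
        have k: "k \<in> I \<and> k \<noteq> m' \<and> k \<noteq> m" using kI kn by simp
        have "(p k - p m') \<bullet> u = (p k - p m) \<bullet> u" using m m' by (simp add: inner_diff_left)
        then have neg: "(p k - p m') \<bullet> u < 0" using lt[of k] k by simp
        have "det2 (- x) (p k - p m') * (u \<bullet> u) = det2 (- x) u * ((p k - p m') \<bullet> u)"
          using det2_perp[OF xu'] by simp
        moreover have "det2 (- x) u = - \<sigma>" by (simp add: \<sigma>_def det2_minus_left)
        moreover have "- \<sigma> * ((p k - p m') \<bullet> u) > 0" using sp neg by (simp add: mult_pos_neg)
        ultimately have "det2 (- x) (p k - p m') * (u \<bullet> u) > 0" by simp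
        then have "det2 (- x) (p k - p m') > 0" using uu by (simp add: zero_less_mult_iff)
        then show "det2 (p m - p m') (p k - p m') > 0" by (simp add: x_def)
      qed (use m m' in auto)
      then show ?thesis using edge_E by blast
    qed
  qed
  have m0E: "m0 \<in> E" using MxE m0 by blast
  have "\<forall>k\<in>I. p k \<bullet> u \<le> p m0 \<bullet> u \<and> (k \<notin> E \<longrightarrow> p k \<bullet> u < p m0 \<bullet> u)"
  proof
    fix k assume k: "k \<in> I"
    have "k \<notin> E \<longrightarrow> p k \<bullet> u \<noteq> M" using MxE k by blast
    then show "p k \<bullet> u \<le> p m0 \<bullet> u \<and> (k \<notin> E \<longrightarrow> p k \<bullet> u < p m0 \<bullet> u)"
      using le[OF k] m0 by auto
  qed
  then show ?thesis using m0E by blast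
qed

lemma E_sub: "E \<subseteq> I" unfolding E_def by auto
lemma finE: "finite E" using E_sub finite_subset by blast

lemma E_ne: "E \<noteq> {}"
proof -
  have "(vector [1, 0] :: real^2) \<noteq> 0" by (simp add: vec2_eq)
  then show ?thesis using max_in_E by blast
qed

definition nxt :: "nat \<Rightarrow> nat" where "nxt i = (SOME j. edge_ok i j)"

lemma nxt_edge: "i \<in> E \<Longrightarrow> edge_ok i (nxt i)"
  unfolding nxt_def using succ_ex by (rule someI_ex) 

lemma nxt_E: "i \<in> E \<Longrightarrow> nxt i \<in> E" using nxt_edge edge_E by blast

lemma nxt_ne: assumes "i \<in> E" shows "nxt i \<noteq> i"
proof -
  have "edge_ok i (nxt i)" using assms by (rule nxt_edge)
  then show ?thesis unfolding edge_ok_def by auto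
qed

lemma nxt_inj: "inj_on nxt E"
  unfolding inj_on_def using nxt_edge succ_inj by metis

lemma nxt_bij: "bij_betw nxt E E"
  unfolding bij_betw_def using nxt_inj endo_inj_surj[OF finE _ nxt_inj] nxt_E by blast

end

context cfg begin

definition orb :: "nat \<Rightarrow> nat set" where "orb i0 = range (\<lambda>l. (nxt ^^ l) i0)"

lemma orb_E: assumes "i0 \<in> E" shows "orb i0 \<subseteq> E"
proof -
  have "(nxt ^^ l) i0 \<in> E" for l by (induction l) (use assms nxt_E in auto)
  then show ?thesis unfolding orb_def by auto
qed

lemma orb_nxt: "nxt ` orb i0 \<subseteq> orb i0"
  unfolding orb_def by (auto intro: range_eqI[of _ _ "Suc _"])

lemma orb_self: "i0 \<in> orb i0" unfolding orb_def by (auto intro: range_eqI[of _ _ 0])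

lemma orb_surj: assumes "i0 \<in> E" shows "nxt ` orb i0 = orb i0"
proof -
  have fin: "finite (orb i0)" using orb_E[OF assms] finE finite_subset by blast
  have "inj_on nxt (orb i0)" using nxt_inj orb_E[OF assms] inj_on_subset by blast
  then show ?thesis using endo_inj_surj[OF fin orb_nxt] by blast
qed

lemma orb_all: assumes i0: "i0 \<in> E" shows "orb i0 = E"
proof (rule ccontr)
  assume "orb i0 \<noteq> E"
  then obtain e where e: "e \<in> E" "e \<notin> orb i0" using orb_E[OF i0] by blast
  obtain u where eI: "e \<in> I" and u: "\<forall>k\<in>I. k \<noteq> e \<longrightarrow> (p k - p e) \<bullet> u < 0"
    using e(1) unfolding E_def by auto
  let ?O = "orb i0"
  have fin: "finite ?O" using orb_E[OF i0] finE finite_subset by blast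
  define M where "M = Max ((\<lambda>k. p k \<bullet> u) ` ?O)"
  have "M \<in> (\<lambda>k. p k \<bullet> u) ` ?O" unfolding M_def using fin orb_self by (intro Max_in) auto
  then obtain m where m: "m \<in> ?O" "p m \<bullet> u = M" by auto
  have le: "p k \<bullet> u \<le> M" if "k \<in> ?O" for k unfolding M_def using that fin by (intro Max_ge) auto
  obtain h where h: "h \<in> ?O" "nxt h = m" using orb_surj[OF i0] m(1) by (metis imageE)
  define j where "j = nxt m"
  have jO: "j \<in> ?O" using orb_nxt m(1) j_def by blast
  have mE: "m \<in> E" "h \<in> E" "j \<in> E" using orb_E[OF i0] m(1) h(1) jO by auto
  have em: "e \<noteq> m" "e \<noteq> h" "e \<noteq> j" using e(2) m(1) h(1) jO by auto
  have ej: "edge_ok m j" using nxt_edge[OF mE(1)] j_def by simp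
  have eh: "edge_ok h m" using nxt_edge[OF mE(2)] h(2) by simp
  have d1: "det2 (p j - p m) (p e - p m) > 0" using ej em eI unfolding edge_ok_def by auto
  have d2: "det2 (p m - p h) (p e - p h) > 0" using eh em eI unfolding edge_ok_def by auto
  have mI: "m \<in> I" using mE E_sub by auto
  have "(p m - p e) \<bullet> u < 0" using u mI em(1) by auto
  then have dup: "(p e - p m) \<bullet> u > 0" by (simp add: inner_diff_left)
  show False
  proof (cases "h = j")
    case True
    have "det2 (p m - p h) (p e - p h) = - det2 (p j - p m) (p e - p m)"
      using True by (simp add: det2_def algebra_simps)
    then show False using d1 d2 by simp
  next
    case False
    have hm: "h \<noteq> m" using nxt_ne[OF mE(2)] h(2) by simp
    have hI: "h \<in> I" using mE E_sub by auto
    have d3: "det2 (p j - p m) (p h - p m) > 0" using ej hm False hI unfolding edge_ok_def by auto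
    define a where "a = p m - p h"
    define b where "b = p j - p m"
    define d where "d = p e - p m"
    have ab: "det2 a b > 0" using d3 by (simp add: a_def b_def det2_def algebra_simps)
    have bd: "det2 b d > 0" using d1 by (simp add: b_def d_def)
    have ad: "det2 a d > 0" using d2 by (simp add: a_def d_def det2_def algebra_simps)
    have au: "(- a) \<bullet> u \<le> 0" using le[OF h(1)] m by (simp add: a_def inner_diff_left)
    have bu: "b \<bullet> u \<le> 0" using le[OF jO] m by (simp add: b_def inner_diff_left)
    have "(det2 a b *\<^sub>R d) \<bullet> u = det2 b d * ((- a) \<bullet> u) + det2 a d * (b \<bullet> u)"
      by (subst det2_three) (simp add: inner_add_left inner_diff_left)
    moreover have "det2 b d * ((- a) \<bullet> u) \<le> 0" using bd au by (simp add: mult_nonneg_nonpos)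
    moreover have "det2 a d * (b \<bullet> u) \<le> 0" using ad bu by (simp add: mult_nonneg_nonpos)
    moreover have "(det2 a b *\<^sub>R d) \<bullet> u > 0" using ab dup by (simp add: d_def)
    ultimately show False by simp
  qed
qed

lemma card_E3:
  assumes "n \<ge> 3" shows "card E \<ge> 3"
proof (rule ccontr)
  assume "\<not> card E \<ge> 3"
  then have c: "card E \<le> 2" by simp
  obtain a where a: "a \<in> E" using E_ne by blast
  obtain b where b: "b \<in> E" "E \<subseteq> {a, b}"
  proof (cases "E = {a}")
    case True then show ?thesis using that a by auto
  next
    case False
    then obtain b where b: "b \<in> E" "b \<noteq> a" using a by blast
    have "E \<subseteq> {a, b}"
    proof
      fix x assume x: "x \<in> E"
      show "x \<in> {a, b}"
      proof (rule ccontr)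
        assume "x \<notin> {a, b}"
        then have "{a, b, x} \<subseteq> E" "card {a, b, x} = 3" using a b x by auto
        then have "card {a, b, x} \<le> card E" using card_mono[OF finE] by blast
        then show False using c \<open>card {a, b, x} = 3\<close> by simp
      qed
    qed
    then show ?thesis using that b by blast
  qed
  have "card I \<ge> 3" using assms by simp
  have "\<not> I \<subseteq> {a, b}"
  proof
    assume "I \<subseteq> {a, b}"
    then have "card I \<le> card {a, b}" by (intro card_mono) auto
    also have "\<dots> \<le> 2" by (simp add: card_insert_le_m1)
    finally show False using \<open>card I \<ge> 3\<close> by simp
  qed
  then obtain q where q: "q \<in> I" "q \<notin> {a, b}" by blast
  have qE: "q \<notin> E" using q b by auto
  obtain u where u0: "u \<noteq> 0" and uab: "p a \<bullet> u = p b \<bullet> u"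
  proof (cases "a = b")
    case True
    have "(vector [1, 0] :: real^2) \<noteq> 0" by (simp add: vec2_eq)
    then show ?thesis using that True by blast
  next
    case False
    have "a \<in> I" "b \<in> I" using a b E_sub by auto
    then have "p b - p a \<noteq> 0" using pinj[of b a] False by auto
    then have "rot (p b - p a) \<noteq> 0" using norm_rot[of "p b - p a"] by (metis norm_eq_zero)
    moreover have "p a \<bullet> rot (p b - p a) = p b \<bullet> rot (p b - p a)"
      using rot_self[of "p b - p a"] by (simp add: inner_diff_left)
    ultimately show ?thesis using that by blast
  qed
  have "-u \<noteq> 0" using u0 by simp
  obtain m1 where m1E: "m1 \<in> E" and m1a: "\<forall>k\<in>I. p k \<bullet> u \<le> p m1 \<bullet> u \<and> (k \<notin> E \<longrightarrow> p k \<bullet> u < p m1 \<bullet> u)"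
    using max_in_E[OF u0] by blast
  have m1: "p q \<bullet> u < p m1 \<bullet> u" using m1a q(1) qE by blast
  obtain m2 where m2E: "m2 \<in> E" and m2a: "\<forall>k\<in>I. p k \<bullet> (-u) \<le> p m2 \<bullet> (-u) \<and> (k \<notin> E \<longrightarrow> p k \<bullet> (-u) < p m2 \<bullet> (-u))"
    using max_in_E[OF \<open>-u \<noteq> 0\<close>] by blast
  have m2: "p q \<bullet> (-u) < p m2 \<bullet> (-u)" using m2a q(1) qE by blast
  have "m1 = a \<or> m1 = b" "m2 = a \<or> m2 = b" using m1E m2E b(2) by auto
  then have "p m1 \<bullet> u = p a \<bullet> u" "p m2 \<bullet> u = p a \<bullet> u" using uab by auto
  then show False using m1 m2 by simp
qed

lemma nxt2_ne:
  assumes "n \<ge> 3" "k \<in> E" shows "nxt (nxt k) \<noteq> k"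
proof
  assume eq: "nxt (nxt k) = k"
  have "(nxt ^^ l) k \<in> {k, nxt k}" for l
    by (induction l) (use eq in auto)
  then have "orb k \<subseteq> {k, nxt k}" unfolding orb_def by auto
  then have "E \<subseteq> {k, nxt k}" using orb_all[OF assms(2)] by simp
  then have "card E \<le> card {k, nxt k}" by (intro card_mono) auto
  also have "\<dots> \<le> 2" by (simp add: card_insert_le_m1)
  finally have "card E \<le> 2" .
  then show False using card_E3[OF assms(1)] by simp
qed

end

lemma angle_id:
  fixes a b a' b' :: "real^2"
  assumes "a \<noteq> 0" "b \<noteq> 0"
  shows "det2 a b * (det2 b b' / (b \<bullet> b) - det2 a a' / (a \<bullet> a)) =
    (a - b) \<bullet> (a' - b') + ((a \<bullet> b) / (a \<bullet> a) - 1) * (a \<bullet> a') + ((a \<bullet> b) / (b \<bullet> b) - 1) * (b \<bullet> b')"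
proof -
  have aa: "a \<bullet> a \<noteq> 0" "b \<bullet> b \<noteq> 0" using assms by auto
  have "det2 a b * (det2 b b' * (a \<bullet> a) - det2 a a' * (b \<bullet> b)) =
    ((a - b) \<bullet> (a' - b')) * (a \<bullet> a) * (b \<bullet> b) + ((a \<bullet> b) - (a \<bullet> a)) * (a \<bullet> a') * (b \<bullet> b)
     + ((a \<bullet> b) - (b \<bullet> b)) * (b \<bullet> b') * (a \<bullet> a)"
    by (simp add: inner2 det2_def algebra_simps)
  then show ?thesis using aa by (simp add: field_simps)
qed

locale cfgf = cfg +
  fixes f :: "nat \<Rightarrow> nat \<Rightarrow> real"
begin

definition gg :: "(nat \<Rightarrow> real^2) \<Rightarrow> nat \<Rightarrow> nat \<Rightarrow> real" where
  "gg v i j = (p i - p j) \<bullet> (v i - v j)"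

definition FF :: "nat \<Rightarrow> nat \<Rightarrow> real" where "FF i j = f (min i j) (max i j)"

abbreviation "XX \<equiv> X n p f"

lemma gg_sym: "gg v i j = gg v j i"
  unfolding gg_def inner2 by (simp add: algebra_simps)

lemma X_ineq: "v \<in> XX \<Longrightarrow> i \<in> I \<Longrightarrow> j \<in> I \<Longrightarrow> i < j \<Longrightarrow> gg v i j \<ge> f i j"
  unfolding X_def Xbar_def gg_def by blast

lemma X_edge: "v \<in> XX \<Longrightarrow> i < j \<Longrightarrow> hull_edge n p i j \<Longrightarrow> gg v i j = f i j"
  unfolding X_def gg_def by blast

lemma X_ge:
  assumes "v \<in> XX" "i \<in> I" "j \<in> I" "i \<noteq> j"
  shows "gg v i j \<ge> FF i j"
proof (cases "i < j")
  case True
  then show ?thesis using X_ineq[OF assms(1-3)] unfolding FF_def by simp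
next
  case False
  then have ji: "j < i" using assms by simp
  then have "gg v j i \<ge> f j i" using X_ineq[OF assms(1) assms(3) assms(2)] by simp
  then show ?thesis using ji gg_sym[of v i j] unfolding FF_def by simp
qed

lemma X_eq:
  assumes "v \<in> XX" "edge_ok i j"
  shows "gg v i j = FF i j"
proof -
  have h1: "hull_edge n p i j" "hull_edge n p j i" using edge_hull edge_hull' assms(2) by auto
  have ne: "i \<noteq> j" using assms(2) unfolding edge_ok_def by auto
  show ?thesis
  proof (cases "i < j")
    case True
    then show ?thesis using X_edge[OF assms(1) True h1(1)] unfolding FF_def by simp
  next
    case False
    then have ji: "j < i" using ne by simp
    then have "gg v j i = f j i" using X_edge[OF assms(1) ji h1(2)] by simp
    then show ?thesis using ji gg_sym[of v i j] unfolding FF_def by simp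
  qed
qed

definition Cst :: "(nat \<Rightarrow> real^2) \<Rightarrow> nat \<Rightarrow> nat \<Rightarrow> real" where
  "Cst v x y = det2 (p y - p x) (v y - v x) / ((p y - p x) \<bullet> (p y - p x))"

lemma Cst_sum: "(\<Sum>k\<in>E. Cst v (nxt k) (nxt (nxt k)) - Cst v k (nxt k)) = 0"
proof -
  have "(\<Sum>k\<in>E. Cst v (nxt k) (nxt (nxt k))) = (\<Sum>k\<in>E. Cst v k (nxt k))"
    using sum.reindex_bij_betw[OF nxt_bij, of "\<lambda>k. Cst v k (nxt k)"] by simp
  then show ?thesis by (simp add: sum_subtractf)
qed

definition DD :: "nat \<Rightarrow> real" where
  "DD k = det2 (p k - p (nxt k)) (p (nxt (nxt k)) - p (nxt k))"
definition AL :: "nat \<Rightarrow> real" where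
  "AL k = (let a = p k - p (nxt k); b = p (nxt (nxt k)) - p (nxt k) in (a \<bullet> b) / (a \<bullet> a) - 1)"
definition BE :: "nat \<Rightarrow> real" where
  "BE k = (let a = p k - p (nxt k); b = p (nxt (nxt k)) - p (nxt k) in (a \<bullet> b) / (b \<bullet> b) - 1)"

lemma local_id:
  assumes "k \<in> E" "n \<ge> 3"
  shows "DD k * (Cst v (nxt k) (nxt (nxt k)) - Cst v k (nxt k)) =
     gg v k (nxt (nxt k)) + AL k * gg v k (nxt k) + BE k * gg v (nxt k) (nxt (nxt k))"
proof -
  define m where "m = nxt k"
  define j where "j = nxt m"
  have mE: "m \<in> E" "j \<in> E" using nxt_E assms(1) by (auto simp: m_def j_def)
  have I3: "k \<in> I" "m \<in> I" "j \<in> I" using mE assms(1) E_sub by auto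
  have km: "k \<noteq> m" using nxt_ne[OF assms(1)] by (simp add: m_def)
  have mj: "m \<noteq> j" using nxt_ne[OF mE(1)] by (simp add: j_def)
  have a0: "p k - p m \<noteq> 0" using pinj I3 km by auto
  have b0: "p j - p m \<noteq> 0" using pinj I3 mj by auto
  have c1: "Cst v k m = det2 (p k - p m) (v k - v m) / ((p k - p m) \<bullet> (p k - p m))"
  proof -
    have "det2 (p m - p k) (v m - v k) = det2 (p k - p m) (v k - v m)" by (simp add: det2_def algebra_simps)
    moreover have "(p m - p k) \<bullet> (p m - p k) = (p k - p m) \<bullet> (p k - p m)"
      by (metis inner_minus_left inner_minus_right minus_diff_eq minus_minus)
    ultimately show ?thesis unfolding Cst_def by simp
  qed
  have c2: "Cst v m j = det2 (p j - p m) (v j - v m) / ((p j - p m) \<bullet> (p j - p m))"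
    by (simp add: Cst_def)
  have "DD k * (Cst v m j - Cst v k m) =
     (p k - p m - (p j - p m)) \<bullet> (v k - v m - (v j - v m)) +
     AL k * ((p k - p m) \<bullet> (v k - v m)) + BE k * ((p j - p m) \<bullet> (v j - v m))"
    unfolding c1 c2 using angle_id[OF a0 b0, where a'="v k - v m" and b'="v j - v m"]
    unfolding DD_def AL_def BE_def Let_def m_def[symmetric] j_def[symmetric] by simp
  moreover have "(p j - p m) \<bullet> (v j - v m) = gg v m j" unfolding gg_def
    by (metis inner_minus_left inner_minus_right minus_diff_eq minus_minus)
  ultimately show ?thesis by (simp add: gg_def m_def[symmetric] j_def[symmetric])
qed

lemma DD_neg:
  assumes "k \<in> E" "n \<ge> 3" shows "DD k < 0"
proof -
  define m where "m = nxt k"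
  define j where "j = nxt m"
  have mE: "m \<in> E" using nxt_E assms(1) by (auto simp: m_def)
  have "edge_ok m j" using nxt_edge[OF mE] by (simp add: j_def)
  moreover have "k \<noteq> m" using nxt_ne[OF assms(1)] by (simp add: m_def)
  moreover have "k \<noteq> j" using nxt2_ne[OF assms(2,1)] by (simp add: m_def j_def)
  moreover have "k \<in> I" using assms E_sub by auto
  ultimately have "det2 (p j - p m) (p k - p m) > 0" unfolding edge_ok_def by auto
  moreover have "det2 (p k - p m) (p j - p m) = - det2 (p j - p m) (p k - p m)" by (rule det2_swap)
  ultimately show ?thesis unfolding DD_def m_def[symmetric] j_def[symmetric] by simp
qed

lemma upper:
  assumes "k0 \<in> E" "n \<ge> 3"
  shows "\<exists>U. \<forall>v\<in>XX. gg v k0 (nxt (nxt k0)) \<le> U"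
proof -
  define w where "w k = - 1 / DD k" for k
  have wpos: "w k > 0" if "k \<in> E" for k using DD_neg[OF that assms(2)] by (simp add: w_def)
  define Z where "Z = (\<Sum>k\<in>E. (AL k * FF k (nxt k) + BE k * FF (nxt k) (nxt (nxt k))) / DD k)"
  define U where "U = (Z - (\<Sum>k\<in>E - {k0}. w k * FF k (nxt (nxt k)))) / w k0"
  have "gg v k0 (nxt (nxt k0)) \<le> U" if v: "v \<in> XX" for v
  proof -
    let ?g = "\<lambda>k. gg v k (nxt (nxt k))"
    have loc: "Cst v (nxt k) (nxt (nxt k)) - Cst v k (nxt k) =
       ?g k / DD k + (AL k * FF k (nxt k) + BE k * FF (nxt k) (nxt (nxt k))) / DD k" if k: "k \<in> E" for k
    proof -
      have "gg v k (nxt k) = FF k (nxt k)" using X_eq[OF v nxt_edge[OF k]] .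
      moreover have "gg v (nxt k) (nxt (nxt k)) = FF (nxt k) (nxt (nxt k))"
        using X_eq[OF v nxt_edge[OF nxt_E[OF k]]] .
      moreover have "DD k \<noteq> 0" using DD_neg[OF k assms(2)] by simp
      ultimately show ?thesis using local_id[OF k assms(2), of v] by (simp add: field_simps)
    qed
    have "0 = (\<Sum>k\<in>E. ?g k / DD k) + Z"
      using Cst_sum[of v] loc by (simp add: Z_def sum.distrib)
    moreover have "(\<Sum>k\<in>E. w k * ?g k) = - (\<Sum>k\<in>E. ?g k / DD k)"
      by (simp add: w_def sum_negf[symmetric])
    ultimately have s: "(\<Sum>k\<in>E. w k * ?g k) = Z" by linarith
    have "(\<Sum>k\<in>E. w k * ?g k) = w k0 * ?g k0 + (\<Sum>k\<in>E - {k0}. w k * ?g k)"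
      using sum.remove[OF finE assms(1)] by simp
    moreover have "(\<Sum>k\<in>E - {k0}. w k * FF k (nxt (nxt k))) \<le> (\<Sum>k\<in>E - {k0}. w k * ?g k)"
    proof (rule sum_mono)
      fix k assume k: "k \<in> E - {k0}"
      then have kE: "k \<in> E" by simp
      have "nxt (nxt k) \<in> I" using nxt_E[OF nxt_E[OF kE]] E_sub by auto
      moreover have "k \<in> I" using kE E_sub by auto
      ultimately have "FF k (nxt (nxt k)) \<le> ?g k" using X_ge[OF v] nxt2_ne[OF assms(2) kE] by metis
      then show "w k * FF k (nxt (nxt k)) \<le> w k * ?g k" using wpos[OF kE] by simp
    qed
    ultimately have "w k0 * ?g k0 \<le> Z - (\<Sum>k\<in>E - {k0}. w k * FF k (nxt (nxt k)))" using s by linarith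
    then show ?thesis using wpos[OF assms(1)] unfolding U_def by (simp add: le_divide_eq mult.commute)
  qed
  then show ?thesis by blast
qed

end

context cfgf begin

definition rb :: "nat set \<Rightarrow> bool" where
  "rb R \<longleftrightarrow> (\<exists>B. \<forall>v\<in>XX. \<exists>a s. \<forall>i\<in>R. norm (v i - (a + s *\<^sub>R rot (p i))) \<le> B)"

lemma rb_mono: "rb R \<Longrightarrow> R' \<subseteq> R \<Longrightarrow> rb R'"
  unfolding rb_def by (meson subsetD)

lemma triv_gg: "(p x - p y) \<bullet> ((v x - (a + s *\<^sub>R rot (p x))) - (v y - (a + s *\<^sub>R rot (p y)))) = gg v x y"
proof -
  have eq: "(v x - (a + s *\<^sub>R rot (p x))) - (v y - (a + s *\<^sub>R rot (p y))) = (v x - v y) - s *\<^sub>R rot (p x - p y)"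
    by (simp add: rot_diff algebra_simps)
  show ?thesis unfolding eq gg_def by (simp only: inner_diff_right inner_scaleR_right rot_self)
qed

lemma rb_two_core:
  assumes ij: "i \<in> I" "j \<in> I" "i \<noteq> j"
  shows "\<exists>a s. v i - (a + s *\<^sub>R rot (p i)) = 0 \<and>
     norm (v j - (a + s *\<^sub>R rot (p j))) \<le> \<bar>gg v i j\<bar> / norm (p j - p i)"
proof -
  define d where "d = p j - p i"
  have d0: "d \<noteq> 0" using pinj[OF ij] by (simp add: d_def)
  have dd: "d \<bullet> d > 0" using d0 by simp
  define s where "s = det2 d (v j - v i) / (d \<bullet> d)"
  define a where "a = v i - s *\<^sub>R rot (p i)"
  define Wj where "Wj = v j - (a + s *\<^sub>R rot (p j))"
  have Wj: "Wj = (v j - v i) - s *\<^sub>R rot d" by (simp add: Wj_def a_def d_def rot_diff algebra_simps)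
  have "d \<bullet> Wj = d \<bullet> (v j - v i)" unfolding Wj by (simp add: inner_diff_right rot_self)
  also have "\<dots> = gg v i j" unfolding gg_def d_def inner2 by (simp add: algebra_simps)
  finally have "d \<bullet> Wj = gg v i j" .
  moreover have "rot d \<bullet> Wj = 0"
  proof -
    have "rot d \<bullet> Wj = rot d \<bullet> (v j - v i) - s * (rot d \<bullet> rot d)"
      unfolding Wj by (simp add: inner_diff_right)
    also have "\<dots> = det2 d (v j - v i) - s * det2 d (rot d)"
      by (simp add: rot_inner)
    finally have "rot d \<bullet> Wj = det2 d (v j - v i) - s * det2 d (rot d)" .
    also have "\<dots> = 0" using dd by (simp add: det2_self s_def)
    finally show ?thesis .
  qed
  moreover have "det2 d (rot d) \<noteq> 0" using dd by (simp add: det2_self)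
  ultimately have "norm Wj \<le> (norm (rot d) * \<bar>gg v i j\<bar> + norm d * 0) / \<bar>d \<bullet> d\<bar>"
    using two_dir_bound[of d "rot d" Wj] by (simp add: det2_self)
  also have "\<dots> = \<bar>gg v i j\<bar> / norm d"
  proof -
    have "\<bar>d \<bullet> d\<bar> = norm d * norm d" by (simp add: power2_norm_eq_inner[symmetric] power2_eq_square)
    then show ?thesis using d0 by (simp add: norm_rot)
  qed
  finally show ?thesis unfolding Wj_def d_def by (intro exI[of _ a] exI[of _ s]) (simp add: a_def)
qed

lemma rb_two:
  assumes ij: "i \<in> I" "j \<in> I" "i \<noteq> j" and C: "\<forall>v\<in>XX. \<bar>gg v i j\<bar> \<le> C"
  shows "rb {i, j}"
proof -
  have "\<forall>v\<in>XX. \<exists>a s. \<forall>x\<in>{i,j}. norm (v x - (a + s *\<^sub>R rot (p x))) \<le> C / norm (p j - p i)"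
  proof
    fix v assume v: "v \<in> XX"
    obtain a s where as: "v i - (a + s *\<^sub>R rot (p i)) = 0"
       "norm (v j - (a + s *\<^sub>R rot (p j))) \<le> \<bar>gg v i j\<bar> / norm (p j - p i)"
      using rb_two_core[OF ij] by blast
    have "\<bar>gg v i j\<bar> / norm (p j - p i) \<le> C / norm (p j - p i)"
      using C v by (simp add: divide_right_mono)
    moreover have "0 \<le> C" using C v by (meson abs_ge_zero order_trans)
    ultimately show "\<exists>a s. \<forall>x\<in>{i,j}. norm (v x - (a + s *\<^sub>R rot (p x))) \<le> C / norm (p j - p i)"
      using as by (intro exI[of _ a] exI[of _ s]) auto
  qed
  then show ?thesis unfolding rb_def by blast
qed

lemma rb_tri:
  assumes ijk: "i \<in> I" "j \<in> I" "k \<in> I" "i \<noteq> j" "j \<noteq> k" "i \<noteq> k"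
    and C: "\<forall>v\<in>XX. \<bar>gg v i j\<bar> \<le> C \<and> \<bar>gg v i k\<bar> \<le> C \<and> \<bar>gg v j k\<bar> \<le> C"
  shows "rb {i, j, k}"
proof -
  define d1 where "d1 = p k - p i"
  define d2 where "d2 = p k - p j"
  have D: "det2 d1 d2 \<noteq> 0"
  proof -
    have "det2 d1 d2 = det2 (p j - p i) (p k - p i)" by (simp add: d1_def d2_def det2_def algebra_simps)
    then show ?thesis using ncol[OF ijk] by simp
  qed
  define Bj where "Bj = C / norm (p j - p i)"
  define Bk where "Bk = (norm d2 * C + norm d1 * (C + norm d2 * Bj)) / \<bar>det2 d1 d2\<bar>"
  have "\<forall>v\<in>XX. \<exists>a s. \<forall>x\<in>{i,j,k}. norm (v x - (a + s *\<^sub>R rot (p x))) \<le> Bj + Bk"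
  proof
    fix v assume v: "v \<in> XX"
    have Cv: "\<bar>gg v i j\<bar> \<le> C" "\<bar>gg v i k\<bar> \<le> C" "\<bar>gg v j k\<bar> \<le> C" using C v by auto
    have C0: "0 \<le> C" using Cv by (meson abs_ge_zero order_trans)
    obtain a s where as: "v i - (a + s *\<^sub>R rot (p i)) = 0"
       "norm (v j - (a + s *\<^sub>R rot (p j))) \<le> \<bar>gg v i j\<bar> / norm (p j - p i)"
      using rb_two_core[of i j v] ijk by blast
    define W where "W x = v x - (a + s *\<^sub>R rot (p x))" for x
    have "\<bar>gg v i j\<bar> / norm (p j - p i) \<le> C / norm (p j - p i)"
      by (rule divide_right_mono) (use Cv in auto)
    then have Wj: "norm (W j) \<le> Bj" using as(2) unfolding W_def Bj_def by linarith
    have Bj0: "0 \<le> Bj" unfolding Bj_def using C0 by simp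
    have e1: "d1 \<bullet> W k = gg v k i" unfolding d1_def W_def using as(1) triv_gg[of k i v a s] by (simp add: W_def inner_diff_right)
    have e2': "d2 \<bullet> (W k - W j) = gg v k j" unfolding W_def d2_def by (rule triv_gg)
    have e2: "d2 \<bullet> W k = gg v k j + d2 \<bullet> W j" using e2' by (simp only: inner_diff_right)
    have a1: "\<bar>d1 \<bullet> W k\<bar> \<le> C" using e1 Cv(2) gg_sym[of v k i] by simp
    have "norm d2 * norm (W j) \<le> norm d2 * Bj" using Wj by (intro mult_left_mono) auto
    then have "\<bar>d2 \<bullet> W j\<bar> \<le> norm d2 * Bj"
      using Cauchy_Schwarz_ineq2[of d2 "W j"] by linarith
    moreover have "\<bar>gg v k j\<bar> \<le> C" using Cv(3) gg_sym[of v k j] by simp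
    moreover have "\<bar>d2 \<bullet> W k\<bar> \<le> \<bar>gg v k j\<bar> + \<bar>d2 \<bullet> W j\<bar>" unfolding e2 by (rule abs_triangle_ineq)
    ultimately have a2: "\<bar>d2 \<bullet> W k\<bar> \<le> C + norm d2 * Bj" by linarith
    have "norm (W k) \<le> (norm d2 * \<bar>d1 \<bullet> W k\<bar> + norm d1 * \<bar>d2 \<bullet> W k\<bar>) / \<bar>det2 d1 d2\<bar>"
      by (rule two_dir_bound[OF D])
    also have "\<dots> \<le> Bk" unfolding Bk_def
      by (intro divide_right_mono add_mono mult_left_mono a1 a2) auto
    finally have Wk: "norm (W k) \<le> Bk" .
    have Bk0: "0 \<le> Bk" using Wk norm_ge_zero order_trans by blast
    have "norm (W i) = 0" using as(1) by (simp add: W_def)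
    then show "\<exists>a s. \<forall>x\<in>{i,j,k}. norm (v x - (a + s *\<^sub>R rot (p x))) \<le> Bj + Bk"
      using Wj Wk Bj0 Bk0 unfolding W_def by (intro exI[of _ a] exI[of _ s]) auto
  qed
  then show ?thesis unfolding rb_def by blast
qed

end

context cfgf begin

lemma rb_merge:
  assumes r1: "rb R1" and r2: "rb R2" and fin: "finite R2"
    and i: "i \<in> R1" "i \<in> R2" and j: "j \<in> R1" "j \<in> R2" and pij: "p i \<noteq> p j"
  shows "rb (R1 \<union> R2)"
proof -
  obtain B1 where B1: "\<forall>v\<in>XX. \<exists>a s. \<forall>x\<in>R1. norm (v x - (a + s *\<^sub>R rot (p x))) \<le> B1"
    using r1 unfolding rb_def by blast
  obtain B2 where B2: "\<forall>v\<in>XX. \<exists>a s. \<forall>x\<in>R2. norm (v x - (a + s *\<^sub>R rot (p x))) \<le> B2"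
    using r2 unfolding rb_def by blast
  define N where "N = norm (p i - p j)"
  have N0: "N > 0" using pij by (simp add: N_def)
  define L where "L = (\<Sum>y\<in>R2. norm (p y - p i))"
  define B where "B = B1 + B2 + (B1 + B2) + 2 * (B1 + B2) / N * L"
  have "\<forall>v\<in>XX. \<exists>a s. \<forall>x\<in>R1 \<union> R2. norm (v x - (a + s *\<^sub>R rot (p x))) \<le> B"
  proof
    fix v assume v: "v \<in> XX"
    obtain a1 s1 where as1: "\<forall>x\<in>R1. norm (v x - (a1 + s1 *\<^sub>R rot (p x))) \<le> B1" using B1 v by blast
    obtain a2 s2 where as2: "\<forall>x\<in>R2. norm (v x - (a2 + s2 *\<^sub>R rot (p x))) \<le> B2" using B2 v by blast
    have B10: "0 \<le> B1" using as1 i(1) norm_ge_zero order_trans by blast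
    have B20: "0 \<le> B2" using as2 i(2) norm_ge_zero order_trans by blast
    have L0: "0 \<le> L" unfolding L_def by (intro sum_nonneg) auto
    define T where "T x = (a2 - a1) + (s2 - s1) *\<^sub>R rot (p x)" for x
    have split: "v x - (a1 + s1 *\<^sub>R rot (p x)) = (v x - (a2 + s2 *\<^sub>R rot (p x))) + T x" for x
      by (simp add: T_def algebra_simps)
    have Tb: "norm (T x) \<le> B1 + B2" if "x \<in> R1" "x \<in> R2" for x
    proof -
      have "T x = (v x - (a1 + s1 *\<^sub>R rot (p x))) - (v x - (a2 + s2 *\<^sub>R rot (p x)))"
        using split[of x] by (simp add: algebra_simps)
      then have "norm (T x) \<le> norm (v x - (a1 + s1 *\<^sub>R rot (p x))) + norm (v x - (a2 + s2 *\<^sub>R rot (p x)))"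
        using norm_triangle_ineq4 by metis
      then show ?thesis using as1 as2 that by (meson add_mono order_trans)
    qed
    have Tij: "T i - T j = (s2 - s1) *\<^sub>R rot (p i - p j)" by (simp add: T_def rot_diff algebra_simps)
    have "\<bar>s2 - s1\<bar> * N = norm (T i - T j)" unfolding Tij N_def by (simp add: norm_rot)
    also have "\<dots> \<le> norm (T i) + norm (T j)" by (rule norm_triangle_ineq4)
    also have "\<dots> \<le> 2 * (B1 + B2)" using Tb[OF i] Tb[OF j] by simp
    finally have sb: "\<bar>s2 - s1\<bar> \<le> 2 * (B1 + B2) / N" using N0 by (simp add: le_divide_eq)
    show "\<exists>a s. \<forall>x\<in>R1 \<union> R2. norm (v x - (a + s *\<^sub>R rot (p x))) \<le> B"
    proof (intro exI[of _ a1] exI[of _ s1] ballI)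
      fix x assume x: "x \<in> R1 \<union> R2"
      show "norm (v x - (a1 + s1 *\<^sub>R rot (p x))) \<le> B"
      proof (cases "x \<in> R1")
        case True
        have "0 \<le> 2 * (B1 + B2) / N * L" using B10 B20 N0 L0 by simp
        moreover have "norm (v x - (a1 + s1 *\<^sub>R rot (p x))) \<le> B1" using as1 True by blast
        ultimately show ?thesis using B10 B20 unfolding B_def by linarith
      next
        case False
        then have xR2: "x \<in> R2" using x by simp
        have Tx: "T x = T i + (s2 - s1) *\<^sub>R rot (p x - p i)" by (simp add: T_def rot_diff algebra_simps)
        have nl: "norm (p x - p i) \<le> L" unfolding L_def using fin xR2 by (intro member_le_sum) auto
        have "norm (T x) \<le> norm (T i) + \<bar>s2 - s1\<bar> * norm (p x - p i)"
          unfolding Tx using norm_triangle_ineq[of "T i" "(s2 - s1) *\<^sub>R rot (p x - p i)"] by (simp add: norm_rot)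
        also have "\<dots> \<le> (B1 + B2) + 2 * (B1 + B2) / N * L"
          using Tb[OF i] sb nl by (intro add_mono mult_mono) (auto simp: B10 B20 N0)
        finally have nT: "norm (T x) \<le> (B1 + B2) + 2 * (B1 + B2) / N * L" .
        have "norm (v x - (a1 + s1 *\<^sub>R rot (p x))) \<le> norm (v x - (a2 + s2 *\<^sub>R rot (p x))) + norm (T x)"
          unfolding split by (rule norm_triangle_ineq)
        also have "\<dots> \<le> B2 + ((B1 + B2) + 2 * (B1 + B2) / N * L)" using as2 xR2 nT by (intro add_mono) auto
        finally show ?thesis unfolding B_def using B10 by linarith
      qed
    qed
  qed
  then show ?thesis unfolding rb_def by blast
qed

lemma max0_scale: assumes "(c::real) \<ge> 0" shows "max 0 (c * x) = c * max 0 x"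
proof (cases "x \<le> 0")
  case True
  then have "c * x \<le> 0" using assms by (simp add: mult_nonneg_nonpos)
  then show ?thesis using True by (simp add: max_absorb1)
next
  case False
  then have "0 \<le> c * x" using assms by simp
  then show ?thesis using False by (simp add: max_absorb2)
qed

lemma interior_bound:
  assumes q: "q \<in> I" "q \<notin> E"
  shows "\<exists>\<delta>>0. \<forall>w. \<delta> * norm w \<le> (\<Sum>i\<in>E. max 0 ((p i - p q) \<bullet> w))"
proof -
  define \<phi> where "\<phi> u = (\<Sum>i\<in>E. max 0 ((p i - p q) \<bullet> u))" for u
  have cont: "continuous_on (sphere 0 1) \<phi>" unfolding \<phi>_def by (intro continuous_intros)
  have ne: "sphere (0::real^2) 1 \<noteq> {}" by simp
  obtain u0 where u0: "u0 \<in> sphere 0 1" "\<forall>y\<in>sphere 0 1. \<phi> u0 \<le> \<phi> y"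
    using continuous_attains_inf[OF compact_sphere ne cont] by blast
  have u00: "u0 \<noteq> 0" using u0(1) by auto
  obtain m where mE: "m \<in> E" and mm: "\<forall>k\<in>I. p k \<bullet> u0 \<le> p m \<bullet> u0 \<and> (k \<notin> E \<longrightarrow> p k \<bullet> u0 < p m \<bullet> u0)"
    using max_in_E[OF u00] by blast
  have "p q \<bullet> u0 < p m \<bullet> u0" using mm q by blast
  then have pos: "max 0 ((p m - p q) \<bullet> u0) > 0" by (simp add: inner_diff_left)
  have "max 0 ((p m - p q) \<bullet> u0) \<le> \<phi> u0" unfolding \<phi>_def
    using mE finE by (intro member_le_sum) auto
  then have d0: "\<phi> u0 > 0" using pos by linarith
  have "\<forall>w. \<phi> u0 * norm w \<le> \<phi> w"
  proof
    fix w :: "real^2"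
    show "\<phi> u0 * norm w \<le> \<phi> w"
    proof (cases "w = 0")
      case True then show ?thesis by (simp add: \<phi>_def)
    next
      case False
      define u where "u = (1 / norm w) *\<^sub>R w"
      have us: "u \<in> sphere 0 1" using False by (simp add: u_def)
      have wu: "w = norm w *\<^sub>R u" using False by (simp add: u_def)
      have "\<phi> w = norm w * \<phi> u"
      proof -
        have "\<phi> w = (\<Sum>i\<in>E. max 0 (norm w * ((p i - p q) \<bullet> u)))"
          unfolding \<phi>_def by (subst wu) simp
        also have "\<dots> = (\<Sum>i\<in>E. norm w * max 0 ((p i - p q) \<bullet> u))"
          by (intro sum.cong refl max0_scale) simp
        finally show ?thesis by (simp add: \<phi>_def sum_distrib_left)
      qed
      moreover have "\<phi> u0 \<le> \<phi> u" using u0(2) us by blast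
      ultimately show ?thesis by (simp add: mult.commute mult_left_mono)
    qed
  qed
  then show ?thesis using d0 unfolding \<phi>_def by blast
qed

end

context cfgf begin

lemma iter_E: "k0 \<in> E \<Longrightarrow> (nxt ^^ l) k0 \<in> E"
  using orb_E unfolding orb_def by blast

lemma tri_bound:
  assumes "n \<ge> 3" "k \<in> E"
  shows "rb {k, nxt k, nxt (nxt k)}"
proof -
  have kE: "k \<in> E" "nxt k \<in> E" "nxt (nxt k) \<in> E" using assms(2) nxt_E by auto
  have kI: "k \<in> I" "nxt k \<in> I" "nxt (nxt k) \<in> I" using kE E_sub by auto
  have ne: "k \<noteq> nxt k" "nxt k \<noteq> nxt (nxt k)" "k \<noteq> nxt (nxt k)"
    using nxt_ne[OF kE(1)] nxt_ne[OF kE(2)] nxt2_ne[OF assms] by auto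
  obtain U where U: "\<forall>v\<in>XX. gg v k (nxt (nxt k)) \<le> U" using upper[OF assms(2,1)] by blast
  define C where "C = \<bar>FF k (nxt k)\<bar> + \<bar>FF (nxt k) (nxt (nxt k))\<bar> + \<bar>U\<bar> + \<bar>FF k (nxt (nxt k))\<bar>"
  have "\<forall>v\<in>XX. \<bar>gg v k (nxt k)\<bar> \<le> C \<and> \<bar>gg v k (nxt (nxt k))\<bar> \<le> C \<and> \<bar>gg v (nxt k) (nxt (nxt k))\<bar> \<le> C"
  proof
    fix v assume v: "v \<in> XX"
    have e1: "gg v k (nxt k) = FF k (nxt k)" using X_eq[OF v nxt_edge[OF kE(1)]] .
    have e2: "gg v (nxt k) (nxt (nxt k)) = FF (nxt k) (nxt (nxt k))" using X_eq[OF v nxt_edge[OF kE(2)]] .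
    have l: "FF k (nxt (nxt k)) \<le> gg v k (nxt (nxt k))" using X_ge[OF v kI(1) kI(3) ne(3)] .
    have u: "gg v k (nxt (nxt k)) \<le> U" using U v by blast
    show "\<bar>gg v k (nxt k)\<bar> \<le> C \<and> \<bar>gg v k (nxt (nxt k))\<bar> \<le> C \<and> \<bar>gg v (nxt k) (nxt (nxt k))\<bar> \<le> C"
      unfolding e1 e2 C_def using l u by (simp add: abs_le_iff) linarith
  qed
  then show ?thesis using rb_tri[OF kI ne] by blast
qed

lemma rb_E:
  assumes n3: "n \<ge> 3"
  shows "rb E"
proof -
  obtain k0 where k0: "k0 \<in> E" using E_ne by blast
  define T where "T l = {(nxt ^^ l) k0, (nxt ^^ Suc l) k0, (nxt ^^ Suc (Suc l)) k0}" for l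
  define S where "S m = (\<Union>l\<in>{..m}. T l)" for m
  have rbT: "rb (T l)" for l
    unfolding T_def using tri_bound[OF n3 iter_E[OF k0, of l]] by simp
  have rbS: "rb (S m)" for m
  proof (induction m)
    case 0 then show ?case using rbT[of 0] by (simp add: S_def)
  next
    case (Suc m)
    have eq: "S (Suc m) = S m \<union> T (Suc m)" by (simp add: S_def atMost_Suc Un_commute)
    define i where "i = (nxt ^^ Suc m) k0"
    have iE: "i \<in> E" unfolding i_def by (rule iter_E[OF k0])
    have iT: "i \<in> T m" "i \<in> T (Suc m)" unfolding T_def i_def by auto
    have jT: "nxt i \<in> T m" "nxt i \<in> T (Suc m)" unfolding T_def i_def by auto
    have "T m \<subseteq> S m" unfolding S_def by auto
    then have iS: "i \<in> S m" "nxt i \<in> S m" using iT jT by auto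
    have "i \<in> I" "nxt i \<in> I" using iE nxt_E[OF iE] E_sub by auto
    then have pij: "p i \<noteq> p (nxt i)"
      using pinj[of i "nxt i"] nxt_ne[OF iE] by auto
    have "finite (T (Suc m))" unfolding T_def by simp
    then show ?case unfolding eq
      using rb_merge[OF Suc.IH rbT[of "Suc m"] _ iS(1) iT(2) iS(2) jT(2) pij] by blast
  qed
  have orbE: "orb k0 = E" by (rule orb_all[OF k0])
  have "\<forall>e\<in>E. \<exists>l. (nxt ^^ l) k0 = e"
  proof
    fix e assume "e \<in> E"
    then have "e \<in> range (\<lambda>l. (nxt ^^ l) k0)" using orbE unfolding orb_def by simp
    then obtain l where "e = (nxt ^^ l) k0" by auto
    then show "\<exists>l. (nxt ^^ l) k0 = e" by auto
  qed
  from bchoice[OF this] obtain L where L: "\<forall>e\<in>E. (nxt ^^ L e) k0 = e" ..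
  define M where "M = Max (L ` E)"
  have "E \<subseteq> S M"
  proof
    fix e assume e: "e \<in> E"
    have "L e \<le> M" unfolding M_def using finE e by (intro Max_ge) auto
    moreover have "(nxt ^^ L e) k0 = e" using L e by blast
    then have "e \<in> T (L e)" unfolding T_def by simp
    ultimately show "e \<in> S M" unfolding S_def by auto
  qed
  then show ?thesis by (rule rb_mono[OF rbS])
qed

lemma rb_all:
  assumes rE: "rb E"
  shows "rb I"
proof -
  obtain B1 where B1: "\<forall>v\<in>XX. \<exists>a s. \<forall>i\<in>E. norm (v i - (a + s *\<^sub>R rot (p i))) \<le> B1"
    using rE unfolding rb_def by blast
  define B where "B = max B1 0"
  have B0: "0 \<le> B" unfolding B_def by simp
  have B: "\<forall>v\<in>XX. \<exists>a s. \<forall>i\<in>E. norm (v i - (a + s *\<^sub>R rot (p i))) \<le> B"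
    using B1 unfolding B_def by (meson max.coboundedI1)
  have "\<forall>q\<in>I - E. \<exists>\<delta>>0. \<forall>w. \<delta> * norm w \<le> (\<Sum>i\<in>E. max 0 ((p i - p q) \<bullet> w))"
    using interior_bound by blast
  from bchoice[OF this] obtain dl where dl: "\<forall>q\<in>I - E. dl q > 0 \<and> (\<forall>w. dl q * norm w \<le> (\<Sum>i\<in>E. max 0 ((p i - p q) \<bullet> w)))" ..
  define Cq where "Cq q = (\<Sum>i\<in>E. \<bar>FF q i\<bar> + norm (p i - p q) * B) / dl q" for q
  define B' where "B' = B + (\<Sum>q\<in>I - E. Cq q)"
  have Cq0: "0 \<le> Cq q" if "q \<in> I - E" for q
    unfolding Cq_def using dl that B0 by (intro divide_nonneg_pos sum_nonneg) auto
  have "\<forall>v\<in>XX. \<exists>a s. \<forall>i\<in>I. norm (v i - (a + s *\<^sub>R rot (p i))) \<le> B'"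
  proof
    fix v assume v: "v \<in> XX"
    obtain a s where as: "\<forall>i\<in>E. norm (v i - (a + s *\<^sub>R rot (p i))) \<le> B" using B v by blast
    define W where "W x = v x - (a + s *\<^sub>R rot (p x))" for x
    have sumle: "(\<Sum>q\<in>I - E. Cq q) \<ge> Cq q" if "q \<in> I - E" for q
      using that Cq0 by (intro member_le_sum) auto
    have sum0: "(\<Sum>q\<in>I - E. Cq q) \<ge> 0" using Cq0 by (intro sum_nonneg) auto
    show "\<exists>a s. \<forall>i\<in>I. norm (v i - (a + s *\<^sub>R rot (p i))) \<le> B'"
    proof (intro exI[of _ a] exI[of _ s] ballI)
      fix q assume qI: "q \<in> I"
      show "norm (v q - (a + s *\<^sub>R rot (p q))) \<le> B'"
      proof (cases "q \<in> E")
        case True then show ?thesis using as sum0 unfolding B'_def by fastforce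
      next
        case False
        have qd: "q \<in> I - E" using qI False by simp
        have tm: "max 0 ((p i - p q) \<bullet> W q) \<le> \<bar>FF q i\<bar> + norm (p i - p q) * B" if iE: "i \<in> E" for i
        proof -
          have iI: "i \<in> I" using iE E_sub by auto
          have qi: "q \<noteq> i" using iE False by auto
          have t: "(p q - p i) \<bullet> (W q - W i) = gg v q i" unfolding W_def by (rule triv_gg)
          have g: "gg v q i \<ge> FF q i" using X_ge[OF v qI iI qi] .
          have "(p i - p q) \<bullet> W q = (p i - p q) \<bullet> W i - gg v q i"
          proof -
            have "(p i - p q) \<bullet> W q = - ((p q - p i) \<bullet> W q)" by (simp add: inner_diff_left)
            also have "(p q - p i) \<bullet> W q = gg v q i + (p q - p i) \<bullet> W i" using t by (simp add: inner_diff_right)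
            finally show ?thesis by (simp add: inner_diff_left)
          qed
          moreover have "(p i - p q) \<bullet> W i \<le> norm (p i - p q) * B"
          proof -
            have "(p i - p q) \<bullet> W i \<le> norm (p i - p q) * norm (W i)" by (rule norm_cauchy_schwarz)
            also have "\<dots> \<le> norm (p i - p q) * B" using as iE unfolding W_def by (intro mult_left_mono) auto
            finally show ?thesis .
          qed
          moreover have "0 \<le> norm (p i - p q) * B" using B0 by simp
          ultimately show ?thesis using g by (simp add: max_def) linarith
        qed
        have "dl q * norm (W q) \<le> (\<Sum>i\<in>E. max 0 ((p i - p q) \<bullet> W q))" using dl qd by blast
        also have "\<dots> \<le> (\<Sum>i\<in>E. \<bar>FF q i\<bar> + norm (p i - p q) * B)" using tm by (intro sum_mono) auto
        finally have "norm (W q) \<le> Cq q" unfolding Cq_def using dl qd by (simp add: le_divide_eq mult.commute)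
        then show ?thesis unfolding W_def B'_def using sumle[OF qd] B0 by linarith
      qed
    qed
  qed
  then show ?thesis unfolding rb_def by blast
qed

end

context cfgf begin

lemma final:
  assumes rI: "rb I" and d12: "p 1 $ 2 \<noteq> p 2 $ 2"
  shows "motions_bounded n XX"
proof -
  obtain B1 where B1: "\<forall>v\<in>XX. \<exists>a s. \<forall>i\<in>I. norm (v i - (a + s *\<^sub>R rot (p i))) \<le> B1"
    using rI unfolding rb_def by blast
  define B where "B = max B1 0"
  have B0: "0 \<le> B" unfolding B_def by simp
  have B: "\<forall>v\<in>XX. \<exists>a s. \<forall>i\<in>I. norm (v i - (a + s *\<^sub>R rot (p i))) \<le> B"
    using B1 unfolding B_def by (meson max.coboundedI1)
  define D where "D = \<bar>p 1 $ 2 - p 2 $ 2\<bar>"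
  have D0: "D > 0" using d12 by (simp add: D_def)
  define Lp where "Lp = (\<Sum>i\<in>I. norm (p i - p 1))"
  define Bf where "Bf = 2 * B + 2 * B / D * Lp"
  have "\<forall>v\<in>XX. \<forall>i\<in>I. norm (v i) \<le> Bf"
  proof (intro ballI)
    fix v i assume v: "v \<in> XX" and iI: "i \<in> I"
    obtain a s where as: "\<forall>i\<in>I. norm (v i - (a + s *\<^sub>R rot (p i))) \<le> B" using B v by blast
    have nm: "normalized_motion n v" using v unfolding X_def Xbar_def by blast
    have v1: "v 1 = 0" using nm unfolding normalized_motion_def by (simp add: vec2_eq)
    have v2: "v 2 $ 1 = 0" using nm unfolding normalized_motion_def by simp
    have I12: "1 \<in> I" "2 \<in> I" using n2 by auto
    define t where "t x = a + s *\<^sub>R rot (p x)" for x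
    have t1: "norm (t 1) \<le> B" using as I12 v1 unfolding t_def by (metis diff_zero norm_minus_commute)
    have "\<bar>(v 2 - t 2) $ 1\<bar> \<le> B" using as I12 component_le_norm_cart[of "v 2 - t 2" 1] unfolding t_def by fastforce
    then have t2: "\<bar>t 2 $ 1\<bar> \<le> B" using v2 by simp
    have "\<bar>t 1 $ 1\<bar> \<le> B" using t1 component_le_norm_cart[of "t 1" 1] by linarith
    moreover have "t 2 $ 1 - t 1 $ 1 = s * (p 1 $ 2 - p 2 $ 2)" unfolding t_def by (simp add: algebra_simps)
    ultimately have "\<bar>s\<bar> * D \<le> 2 * B" using t2 unfolding D_def by (simp add: abs_mult[symmetric])
    then have sB: "\<bar>s\<bar> \<le> 2 * B / D" using D0 by (simp add: le_divide_eq)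
    have ti: "t i = t 1 + s *\<^sub>R rot (p i - p 1)" unfolding t_def by (simp add: rot_diff algebra_simps)
    have nl: "norm (p i - p 1) \<le> Lp" unfolding Lp_def using iI by (intro member_le_sum) auto
    have "norm (t i) \<le> norm (t 1) + \<bar>s\<bar> * norm (p i - p 1)"
      unfolding ti using norm_triangle_ineq[of "t 1" "s *\<^sub>R rot (p i - p 1)"] by (simp add: norm_rot)
    also have "\<dots> \<le> B + 2 * B / D * Lp" using t1 sB nl B0 D0 by (intro add_mono mult_mono) auto
    finally have nti: "norm (t i) \<le> B + 2 * B / D * Lp" .
    have "norm (v i) \<le> norm (v i - t i) + norm (t i)" using norm_triangle_ineq[of "v i - t i" "t i"] by simp
    also have "\<dots> \<le> B + (B + 2 * B / D * Lp)" using as iI nti unfolding t_def by (intro add_mono) auto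
    finally show "norm (v i) \<le> Bf" unfolding Bf_def by simp
  qed
  then show ?thesis unfolding motions_bounded_def by blast
qed

end

theorem lemma3p4:
  fixes n :: nat and p :: "nat \<Rightarrow> real^2" and f :: "nat \<Rightarrow> nat \<Rightarrow> real"
  assumes "n \<ge> 2"
    and "general_position n p"
    and "p 1 $ 2 \<noteq> p 2 $ 2"
  shows "motions_bounded n (X n p f)"
proof -
  interpret cfgf n p f using assms(1,2) by unfold_locales
  have "rb {1..n}"
  proof (cases "n = 2")
    case True
    have I: "{1..n} = {1, 2}" using True by auto
    have e: "edge_ok 1 2" unfolding edge_ok_def using I by auto
    have "\<forall>v\<in>X n p f. \<bar>gg v 1 2\<bar> \<le> \<bar>FF 1 2\<bar>" using X_eq[OF _ e] by simp
    then have "rb {1, 2}" using rb_two[where i=1 and j=2 and C="\<bar>FF 1 2\<bar>"] I assms(1) by auto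
    then show ?thesis using I by simp
  next
    case False
    then have "n \<ge> 3" using assms(1) by simp
    then show ?thesis using rb_all rb_E by blast
  qed
  then show ?thesis using final assms(3) by blast
qed


end
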